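(* Assume Hypothesis (H1) and let $n\ge2$. Put $K_0:=(H_0-E_0)^{-1}\bar P_0$ and $E_1:=\langle\psi_0,V\psi_0\rangle$, and define recursively, for $m=1,\dots,n-2$, $$K_m:=\sum_{j=1}^{m}K_{j-1}\,(E_{m+1-j}-\delta_{jm}V)\,K_0,$$ and, for $m=2,\dots,n$, $E_m:=-\langle V\psi_0,K_{m-2}V\psi_0\rangle$, where it is assumed that $\bar P_0V\psi_0\in{\rm dom}(K_l)$ for $l=0,\dots,n-2$ (i.e. all operator products applied to $\bar P_0V\psi_0$ are well defined). Then for all $m=1,\dots,n$ $$\lim_{\lambda\downarrow0}\lambda^{-m}\Big(E(\lambda)-\sum_{k=0}^{m}E_k\lambda^k\Big)=0 .$$
   Context: Let $H_0$ and $V$ be self-adjoint operators in a Hilbert space $\mathcal H$. Hypothesis (H1): $H_0$ is bounded from below and $V$ is $H_0$-bounded; there is $\lambda_0>0$ such that for every $\lambda\in[0,\lambda_0]$ there is a simple eigenvalue $E(\lambda)$ of $H(\lambda)=H_0+\lambda V$ with eigenvector $\psi(\lambda)$; moreover $\lim_{\lambda\to0}\psi(\lambda)=\psi(0)\neq0$, $\lim_{\lambda\to0}E(\lambda)=E(0)$, and $\langle\psi(0),\psi(\lambda)\rangle=1$ for all $\lambda\in[0,\lambda_0]$. Write $E_0=E(0)$, $\psi_0=\psi(0)$, $P_0$ the orthogonal projection onto $\ker(H_0-E_0)=\mathbb C\psi_0$, $\bar P_0=1-P_0$. The operator $(H_0-E_0)^{-1}\bar P_0$ maps a vector $\xi$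 to the unique $\chi\in{\rm dom}(H_0)\cap\bar P_0\mathcal H$ with $(H_0-E_0)\chi=\bar P_0\xi$, on the set of $\xi$ for which such $\chi$ exists. $\delta_{ij}$ is the Kronecker delta. *)

theory Defs
  imports "HOL-Analysis.Analysis"
begin

text \<open>HOL-Analysis has no complex inner product spaces, so we introduce the class of
complex Hilbert spaces: a real Banach space with a compatible complex scalar
multiplication and a complex inner product (conjugate linear in the first,
linear in the second argument) inducing the norm.\<close>

class complex_hilbert = banach +
  fixes cscale :: "complex \<Rightarrow> 'a \<Rightarrow> 'a"
    and cinner :: "'a \<Rightarrow> 'a \<Rightarrow> complex"
  assumes cscale_add_left: "cscale (a + b) x = cscale a x + cscale b x"
    and cscale_add_right: "cscale a (x + y) = cscale a x + cscale a y"
    and cscale_cscale: "cscale a (cscale b x) = cscale (a * b) x"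
    and cscale_one: "cscale 1 x = x"
    and cscale_of_real: "cscale (complex_of_real r) x = r *\<^sub>R x"
    and cinner_add_right: "cinner x (y + z) = cinner x y + cinner x z"
    and cinner_cscale_right: "cinner x (cscale c y) = c * cinner x y"
    and cinner_commute: "cinner y x = cnj (cinner x y)"
    and cinner_norm: "cinner x x = complex_of_real ((norm x)\<^sup>2)"

text \<open>An operator with domain D is given by the pair (D, A); A is only relevant on D.\<close>

definition linear_on :: "'a::complex_hilbert set \<Rightarrow> ('a \<Rightarrow> 'a) \<Rightarrow> bool" where
  "linear_on D A \<longleftrightarrow> 0 \<in> D \<and>
     (\<forall>x\<in>D. \<forall>y\<in>D. \<forall>c. x + cscale c y \<in> D \<and> A (x + cscale c y) = A x + cscale c (A y))"

text \<open>Self-adjointness: densely defined linear operator with A* = A, i.e. the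
adjoint relation  (y, z) with  <y, A x> = <z, x> for all x in D  is exactly the graph of A.\<close>

definition self_adjoint :: "'a::complex_hilbert set \<Rightarrow> ('a \<Rightarrow> 'a) \<Rightarrow> bool" where
  "self_adjoint D A \<longleftrightarrow> linear_on D A \<and> closure D = UNIV \<and>
     (\<forall>y z. (\<forall>x\<in>D. cinner y (A x) = cinner z x) \<longleftrightarrow> (y \<in> D \<and> z = A y))"

definition bounded_below :: "'a::complex_hilbert set \<Rightarrow> ('a \<Rightarrow> 'a) \<Rightarrow> bool" where
  "bounded_below D A \<longleftrightarrow> (\<exists>c::real. \<forall>x\<in>D. Re (cinner x (A x)) \<ge> c * (norm x)\<^sup>2)"

definition relatively_bounded ::
  "'a::complex_hilbert set \<Rightarrow> ('a \<Rightarrow> 'a) \<Rightarrow> 'a set \<Rightarrow> ('a \<Rightarrow> 'a) \<Rightarrow> bool" where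
  "relatively_bounded DV V D0 H0 \<longleftrightarrow> D0 \<subseteq> DV \<and>
     (\<exists>a b::real. \<forall>x\<in>D0. norm (V x) \<le> a * norm (H0 x) + b * norm x)"

definition simple_eigen :: "'a::complex_hilbert set \<Rightarrow> ('a \<Rightarrow> 'a) \<Rightarrow> real \<Rightarrow> 'a \<Rightarrow> bool" where
  "simple_eigen D A E psi \<longleftrightarrow> psi \<in> D \<and> psi \<noteq> 0 \<and> A psi = E *\<^sub>R psi \<and>
     {x \<in> D. A x = E *\<^sub>R x} = range (\<lambda>c. cscale c psi)"

definition orth_proj :: "'a::complex_hilbert set \<Rightarrow> 'a \<Rightarrow> 'a" where
  "orth_proj S x = (THE y. y \<in> S \<and> (\<forall>z\<in>S. cinner z (x - y) = 0))"

type_synonym 'a pop = "'a \<Rightarrow> 'a option"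

definition pcomp :: "'a pop \<Rightarrow> 'a pop \<Rightarrow> 'a pop" where
  "pcomp A B x = Option.bind (B x) A"

definition psum :: "(nat \<Rightarrow> 'a::ab_group_add pop) \<Rightarrow> nat \<Rightarrow> 'a pop" where
  "psum F m x = (if \<forall>j\<in>{1..m}. F j x \<noteq> None
                 then Some (\<Sum>j=1..m. the (F j x)) else None)"

text \<open>The reduced resolvent (H0 - E0)^{-1} Pbar0: maps xi to the unique chi in
dom(H0) \<inter> Pbar0 H with (H0 - E0) chi = Pbar0 xi, where such chi exists.\<close>

definition reduced_resolvent ::
  "'a::complex_hilbert set \<Rightarrow> ('a \<Rightarrow> 'a) \<Rightarrow> real \<Rightarrow> ('a \<Rightarrow> 'a) \<Rightarrow> 'a pop" where
  "reduced_resolvent D0 H0 E0 Pbar xi =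
     (if \<exists>!chi. chi \<in> D0 \<and> Pbar chi = chi \<and> H0 chi - E0 *\<^sub>R chi = Pbar xi
      then Some (THE chi. chi \<in> D0 \<and> Pbar chi = chi \<and> H0 chi - E0 *\<^sub>R chi = Pbar xi)
      else None)"

text \<open>The operator  e - d V  (d = 1 or 0) with domain dom V if d = 1, the whole space if d = 0.\<close>

definition shift_op :: "'a::complex_hilbert set \<Rightarrow> ('a \<Rightarrow> 'a) \<Rightarrow> complex \<Rightarrow> bool \<Rightarrow> 'a pop" where
  "shift_op DV V e d x =
     (if d then (if x \<in> DV then Some (cscale e x - V x) else None) else Some (cscale e x))"

end

theory Submission
  imports Defs
begin



lemma cscale_zero_right[simp]: "cscale c 0 = 0"
proof -
  have "cscale c 0 + cscale c 0 = cscale c 0 + 0" using cscale_add_right[of c 0 0] by simp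
  thus ?thesis by simp
qed
lemma cscale_zero_left[simp]: "cscale 0 x = 0"
  using cscale_of_real[of 0 x] by simp
lemma cinner_zero_right[simp]: "cinner x 0 = 0"
proof -
  have "cinner x 0 + cinner x 0 = cinner x 0 + 0" using cinner_add_right[of x 0 0] by simp
  thus ?thesis by simp
qed
lemma cinner_zero_left[simp]: "cinner 0 x = 0"
  using cinner_commute[of 0 x] by simp
lemma cinner_add_left: "cinner (x + y) z = cinner x z + cinner y z"
  using cinner_commute[of "x+y" z] cinner_commute[of x z] cinner_commute[of y z] cinner_add_right[of z x y]
  by simp
lemma cinner_cscale_left: "cinner (cscale c x) y = cnj c * cinner x y"
  using cinner_commute[of "cscale c x" y] cinner_commute[of x y] cinner_cscale_right[of y c x]
  by simp
lemma cinner_scaleR_right: "cinner x (r *\<^sub>R y) = complex_of_real r * cinner x y"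
  using cinner_cscale_right[of x "complex_of_real r" y] cscale_of_real[of r y] by simp
lemma cinner_scaleR_left: "cinner (r *\<^sub>R x) y = complex_of_real r * cinner x y"
  using cinner_cscale_left[of "complex_of_real r" x y] cscale_of_real[of r x] by simp
lemma cinner_minus_right: "cinner x (- y) = - cinner x y"
  using cinner_scaleR_right[of x "-1" y] by simp
lemma cinner_minus_left: "cinner (- x) y = - cinner x y"
  using cinner_scaleR_left[of "-1" x y] by simp
lemma cinner_diff_right: "cinner x (y - z) = cinner x y - cinner x z"
  using cinner_add_right[of x y "-z"] cinner_minus_right[of x z] by simp
lemma cinner_diff_left: "cinner (x - y) z = cinner x z - cinner y z"
  using cinner_add_left[of x "-y" z] cinner_minus_left[of y z] by simp
lemma cinner_sum_left: "cinner (\<Sum>j\<in>A. f j) z = (\<Sum>j\<in>A. cinner (f j) z)"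
  by (induction A rule: infinite_finite_induct) (auto simp: cinner_add_left)

lemma cauchy_schwarz: "cmod (cinner x y) \<le> norm x * norm y"
proof (cases "x = 0")
  case True then show ?thesis by simp
next
  case False
  define a where "a = cinner x y"
  define N where "N = (norm x)\<^sup>2"
  have N: "N > 0" using False by (simp add: N_def)
  define c where "c = a / complex_of_real N"
  define z where "z = y - cscale c x"
  have xx: "cinner x x = complex_of_real N" by (simp add: N_def cinner_norm)
  have "cinner x z = a - c * complex_of_real N"
    unfolding z_def cinner_diff_right cinner_cscale_right xx a_def ..
  hence xz: "cinner x z = 0" using N by (simp add: c_def)
  have "cinner z z = cinner y z - cnj c * cinner x z"
    by (subst (1) z_def) (simp only: cinner_diff_left cinner_cscale_left)
  hence "cinner z z = cinner y z" using xz by simp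
  also have "\<dots> = cinner y y - c * cinner y x" by (simp add: z_def cinner_diff_right cinner_cscale_right)
  also have "cinner y x = cnj a" by (simp add: a_def cinner_commute[of y x])
  also have "c * cnj a = complex_of_real ((cmod a)\<^sup>2 / N)"
    using complex_norm_square[of a] by (simp add: c_def)
  finally have "complex_of_real ((norm z)\<^sup>2) = complex_of_real ((norm y)\<^sup>2 - (cmod a)\<^sup>2 / N)"
    by (simp add: cinner_norm)
  hence "(norm z)\<^sup>2 = (norm y)\<^sup>2 - (cmod a)\<^sup>2 / N" using of_real_eq_iff by blast
  hence "(cmod a)\<^sup>2 / N \<le> (norm y)\<^sup>2" using zero_le_power2[of "norm z"] by linarith
  hence "(cmod a)\<^sup>2 \<le> N * (norm y)\<^sup>2" using N by (simp add: divide_le_eq mult.commute)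
  hence "(cmod a)\<^sup>2 \<le> (norm x * norm y)\<^sup>2" by (simp add: N_def power_mult_distrib)
  hence "cmod a \<le> norm x * norm y" by (rule power2_le_imp_le) simp
  thus ?thesis unfolding a_def .
qed


definition sm :: "nat \<Rightarrow> (real \<Rightarrow> complex) \<Rightarrow> bool" where
  "sm p f \<longleftrightarrow> ((\<lambda>t. f t / complex_of_real t ^ p) \<longlongrightarrow> 0) (at_right 0)"

lemma ev_pos: "eventually (\<lambda>t::real. 0 < t) (at_right 0)"
  by (simp add: eventually_at_right_less)

lemma tendsto_t: "((\<lambda>t. complex_of_real t) \<longlongrightarrow> 0) (at_right 0)"
proof -
  have "((\<lambda>t. complex_of_real t) \<longlongrightarrow> complex_of_real 0) (at_right 0)"
    by (intro tendsto_of_real tendsto_ident_at)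
  thus ?thesis by simp
qed

lemma sm_cong: "eventually (\<lambda>t. f t = g t) (at_right 0) \<Longrightarrow> sm p f \<Longrightarrow> sm p g"
  unfolding sm_def by (erule Lim_transform_eventually) (auto elim: eventually_mono)

lemma sm_zero: "sm p (\<lambda>t. 0)"
  by (simp add: sm_def)

lemma sm_add: "sm p f \<Longrightarrow> sm p g \<Longrightarrow> sm p (\<lambda>t. f t + g t)"
  unfolding sm_def add_divide_distrib by (drule (1) tendsto_add) simp

lemma sm_uminus: "sm p f \<Longrightarrow> sm p (\<lambda>t. - f t)"
  unfolding sm_def by (drule tendsto_minus) simp

lemma sm_diff: "sm p f \<Longrightarrow> sm p g \<Longrightarrow> sm p (\<lambda>t. f t - g t)"
  unfolding sm_def diff_divide_distrib by (drule (1) tendsto_diff) simp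

lemma sm_sum: "(\<And>i. i \<in> A \<Longrightarrow> sm p (f i)) \<Longrightarrow> sm p (\<lambda>t. \<Sum>i\<in>A. f i t)"
proof (induction A rule: infinite_finite_induct)
  case (infinite A) then show ?case by (simp add: sm_zero)
next
  case empty then show ?case by (simp add: sm_zero)
next
  case (insert x F)
  then show ?case by (simp add: sm_add)
qed

lemma sm_mult_conv: "sm p f \<Longrightarrow> (g \<longlongrightarrow> c) (at_right 0) \<Longrightarrow> sm p (\<lambda>t. g t * f t)"
  unfolding sm_def by (drule (1) tendsto_mult) (simp add: mult.commute)

lemma sm_cnj: "sm p f \<Longrightarrow> sm p (\<lambda>t. cnj (f t))"
  unfolding sm_def by (drule tendsto_cnj) simp

lemma sm_mono: assumes "sm p f" "q \<le> p" shows "sm q f"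
proof -
  have lim: "((\<lambda>t. f t / complex_of_real t ^ p * complex_of_real t ^ (p - q)) \<longlongrightarrow> 0 * 0 ^ (p - q)) (at_right 0)"
    using assms(1) unfolding sm_def by (intro tendsto_mult tendsto_power tendsto_t)
  have "eventually (\<lambda>t. f t / complex_of_real t ^ p * complex_of_real t ^ (p - q) = f t / complex_of_real t ^ q) (at_right 0)"
    using ev_pos
  proof (rule eventually_mono)
    fix t :: real assume t: "0 < t"
    have "complex_of_real t ^ p = complex_of_real t ^ q * complex_of_real t ^ (p - q)"
      using assms(2) by (simp add: power_add[symmetric])
    thus "f t / complex_of_real t ^ p * complex_of_real t ^ (p - q) = f t / complex_of_real t ^ q"
      using t by (simp add: field_simps)
  qed
  with lim show ?thesis unfolding sm_def by (auto intro: Lim_transform_eventually)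
qed

lemma sm_times_pow: assumes "sm p f" shows "sm (p + k) (\<lambda>t. complex_of_real t ^ k * f t)"
proof -
  have "eventually (\<lambda>t. f t / complex_of_real t ^ p = complex_of_real t ^ k * f t / complex_of_real t ^ (p + k)) (at_right 0)"
    using ev_pos by (rule eventually_mono) (simp add: power_add field_simps)
  with assms show ?thesis unfolding sm_def by (auto intro: Lim_transform_eventually)
qed

lemma sm_pow: assumes "p < k" shows "sm p (\<lambda>t. c * complex_of_real t ^ k)"
proof -
  have lim: "((\<lambda>t. c * complex_of_real t ^ (k - p)) \<longlongrightarrow> c * 0 ^ (k - p)) (at_right 0)"
    by (intro tendsto_mult tendsto_power tendsto_t tendsto_const)
  have z: "c * 0 ^ (k - p) = 0" using assms by simp
  have lim0: "((\<lambda>t. c * complex_of_real t ^ (k - p)) \<longlongrightarrow> 0) (at_right 0)"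
    using lim unfolding z .
  have ev: "eventually (\<lambda>t. c * complex_of_real t ^ (k - p) = c * complex_of_real t ^ k / complex_of_real t ^ p) (at_right 0)"
    using ev_pos
  proof (rule eventually_mono)
    fix t :: real assume t: "0 < t"
    have "complex_of_real t ^ k = complex_of_real t ^ p * complex_of_real t ^ (k - p)"
      using assms by (simp add: power_add[symmetric])
    thus "c * complex_of_real t ^ (k - p) = c * complex_of_real t ^ k / complex_of_real t ^ p"
      using t by (simp add: field_simps)
  qed
  show ?thesis unfolding sm_def by (rule Lim_transform_eventually[OF lim0 ev])
qed

lemma sm_conv: "(f \<longlongrightarrow> c) (at_right 0) \<Longrightarrow> sm 0 (\<lambda>t. f t - c)"
  unfolding sm_def by (drule tendsto_diff[OF _ tendsto_const[of c]]) simp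




lemma reidx_inner:
  fixes g :: "nat \<Rightarrow> nat \<Rightarrow> complex"
  shows "(\<Sum>j\<in>{1..<p}. g (p+1-j) (j-1)) = (\<Sum>k\<in>{2..p}. g k (p-k))"
  by (rule sum.reindex_bij_witness[where i="\<lambda>k. p+1-k" and j="\<lambda>j. p+1-j"]) auto

lemma reidx:
  fixes t :: complex and a b :: "nat \<Rightarrow> complex" and g :: "nat \<Rightarrow> nat \<Rightarrow> complex"
  assumes "\<forall>m\<in>{1..<p}. a m = b (m-1) + (\<Sum>j\<in>{1..<m}. g (m+1-j) (j-1))" "p \<ge> 1"
  shows "(\<Sum>m<p. t^(m+1)*a m) = t * a 0 + (\<Sum>m<p-1. t^(m+2) * b m)
           + (\<Sum>k\<in>{2..p}. \<Sum>m<p-k. t^(k+m+1) * g k m)"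
  using assms
proof (induction p)
  case 0 then show ?case by simp
next
  case (Suc p)
  show ?case
  proof (cases "p = 0")
    case True then show ?thesis by simp
  next
    case False
    have IH: "(\<Sum>m<p. t^(m+1)*a m) = t * a 0 + (\<Sum>m<p-1. t^(m+2) * b m)
           + (\<Sum>k\<in>{2..p}. \<Sum>m<p-k. t^(k+m+1) * g k m)"
      using Suc.IH Suc.prems False by auto
    have ap: "a p = b (p-1) + (\<Sum>j\<in>{1..<p}. g (p+1-j) (j-1))"
      using Suc.prems False by auto
    have S1: "(\<Sum>k\<in>{2..Suc p}. \<Sum>m<Suc p-k. t^(k+m+1) * g k m)
        = (\<Sum>k\<in>{2..p}. \<Sum>m<Suc p-k. t^(k+m+1) * g k m)"
      by (simp add: sum.cl_ivl_Suc)
    have S2: "(\<Sum>k\<in>{2..p}. \<Sum>m<Suc p-k. t^(k+m+1) * g k m)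
        = (\<Sum>k\<in>{2..p}. (\<Sum>m<p-k. t^(k+m+1) * g k m) + t^(p+1) * g k (p-k))"
    proof (rule sum.cong[OF refl])
      fix k assume k: "k \<in> {2..p}"
      hence "Suc p - k = Suc (p - k)" by auto
      moreover have "k + (p - k) + 1 = p + 1" using k by auto
      ultimately show "(\<Sum>m<Suc p-k. t^(k+m+1) * g k m) = (\<Sum>m<p-k. t^(k+m+1) * g k m) + t^(p+1) * g k (p-k)"
        by simp
    qed
    have S3: "(\<Sum>m<Suc p - 1. t^(m+2) * b m) = (\<Sum>m<p-1. t^(m+2) * b m) + t^(p+1) * b (p-1)"
    proof -
      have e: "Suc p - 1 = Suc (p - 1)" using False by auto
      have e2: "p - 1 + 2 = p + 1" using False by auto
      have "(\<Sum>m<Suc p - 1. t^(m+2) * b m) = (\<Sum>m<p-1. t^(m+2) * b m) + t^(p-1+2) * b (p-1)"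
        unfolding e sum.lessThan_Suc ..
      thus ?thesis unfolding e2 .
    qed
    have "(\<Sum>m<Suc p. t^(m+1)*a m) = (\<Sum>m<p. t^(m+1)*a m) + t^(p+1) * a p" by simp
    also have "\<dots> = t * a 0 + (\<Sum>m<p-1. t^(m+2) * b m) + t^(p+1) * b (p-1)
           + ((\<Sum>k\<in>{2..p}. \<Sum>m<p-k. t^(k+m+1) * g k m) + (\<Sum>k\<in>{2..p}. t^(p+1) * g k (p-k)))"
      unfolding IH ap reidx_inner by (simp add: algebra_simps sum_distrib_left)
    also have "\<dots> = t * a 0 + (\<Sum>m<Suc p - 1. t^(m+2) * b m)
           + (\<Sum>k\<in>{2..Suc p}. \<Sum>m<Suc p-k. t^(k+m+1) * g k m)"
      unfolding S1 S2 S3 sum.distrib by (simp add: algebra_simps)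
    finally show ?thesis .
  qed
qed


lemma final_alg:
  fixes T mu qw qv a0 Qz z0 A :: complex and b :: "nat \<Rightarrow> complex"
    and g :: "nat \<Rightarrow> nat \<Rightarrow> complex" and e :: "nat \<Rightarrow> complex"
  assumes p: "1 \<le> p"
    and A: "A = T * a0 + (\<Sum>m<p-1. T^(m+2) * b m) + (\<Sum>k\<in>{2..p}. \<Sum>m<p-k. T^(k+m+1) * g k m)"
    and Qz: "Qz = z0 + T*mu*qw - T*qv"
  shows "Qz - (z0 - A) = T^1 * (qw * (mu - (\<Sum>k<p. e (Suc k) * T^k)))
     + T^1 * ((e 1 * qw - qv) - (-a0 - (\<Sum>m<p-1. T^(m+1) * b m)))
     + (\<Sum>k\<in>{2..p}. T^k * (e k * qw - (0 - (\<Sum>m<p-k. T^(m+1) * g k m))))"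
proof -
  have i: "T * (\<Sum>m<p-1. T^(m+1) * b m) = (\<Sum>m<p-1. T^(m+2) * b m)"
    by (simp add: sum_distrib_left mult.assoc)
  have ii: "(\<Sum>k\<in>{2..p}. T^k * (\<Sum>m<p-k. T^(m+1) * g k m)) = (\<Sum>k\<in>{2..p}. \<Sum>m<p-k. T^(k+m+1) * g k m)"
    by (simp add: sum_distrib_left power_add mult_ac)
  have iii0: "T * (\<Sum>k<p. e (Suc k) * T^k) = (\<Sum>k\<in>{Suc 0..p}. e k * T^k)"
    unfolding sum.atLeast1_atMost_eq by (simp add: sum_distrib_left mult.commute mult.left_commute)
  have iii: "T * (\<Sum>k<p. e (Suc k) * T^k) = e 1 * T + (\<Sum>k\<in>{2..p}. e k * T^k)"
    unfolding iii0 using p by (simp add: sum.atLeast_Suc_atMost numeral_2_eq_2)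
  have iv: "(\<Sum>k\<in>{2..p}. T^k * (e k * qw)) = qw * (\<Sum>k\<in>{2..p}. e k * T^k)"
    by (simp add: sum_distrib_left mult_ac)
  have "T^1 * (qw * (mu - (\<Sum>k<p. e (Suc k) * T^k)))
     + T^1 * ((e 1 * qw - qv) - (-a0 - (\<Sum>m<p-1. T^(m+1) * b m)))
     + (\<Sum>k\<in>{2..p}. T^k * (e k * qw - (0 - (\<Sum>m<p-k. T^(m+1) * g k m))))
     = T*mu*qw - qw * (T * (\<Sum>k<p. e (Suc k) * T^k)) + T * e 1 * qw - T*qv + T*a0
       + T * (\<Sum>m<p-1. T^(m+1) * b m)
       + (\<Sum>k\<in>{2..p}. T^k * (e k * qw)) + (\<Sum>k\<in>{2..p}. T^k * (\<Sum>m<p-k. T^(m+1) * g k m))"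
    by (simp add: algebra_simps sum.distrib)
  also have "\<dots> = T*mu*qw - T*qv + A"
    unfolding i ii iii iv A by (simp add: algebra_simps)
  finally show ?thesis using Qz by simp
qed




locale pert =
  fixes D0 DV :: "'a::complex_hilbert set"
    and H0 V :: "'a \<Rightarrow> 'a"
    and lambda0 :: real
    and E :: "real \<Rightarrow> real"
    and psi :: "real \<Rightarrow> 'a"
    and n :: nat
    and Pbar0 :: "'a \<Rightarrow> 'a"
    and K :: "nat \<Rightarrow> 'a pop"
    and Es :: "nat \<Rightarrow> complex"
  assumes H0_sa: "self_adjoint D0 H0"
    and V_sa: "self_adjoint DV V"
    and V_rel: "relatively_bounded DV V D0 H0"
    and lambda0_pos: "lambda0 > 0"
    and eigen: "\<forall>l\<in>{0..lambda0}.
                  simple_eigen D0 (\<lambda>x. H0 x + l *\<^sub>R V x) (E l) (psi l)"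
    and psi_lim: "(psi \<longlongrightarrow> psi 0) (at_right 0)"
    and normalization: "\<forall>l\<in>{0..lambda0}. cinner (psi 0) (psi l) = 1"
    and Pbar0_def: "Pbar0 = (\<lambda>x. x - orth_proj {y \<in> D0. H0 y = E 0 *\<^sub>R y} x)"
    and K0_def: "K 0 = reduced_resolvent D0 H0 (E 0) Pbar0"
    and Km_def: "\<forall>m\<in>{1..n-2}. K m =
                   psum (\<lambda>j. pcomp (K (j - 1))
                                 (pcomp (shift_op DV V (Es (m + 1 - j)) (j = m)) (K 0))) m"
    and E0_def: "Es 0 = complex_of_real (E 0)"
    and E1_def: "Es 1 = cinner (psi 0) (V (psi 0))"
    and Em_def: "\<forall>m\<in>{2..n}. Es m = - cinner (V (psi 0)) (the (K (m - 2) (V (psi 0))))"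
    and dom_K: "\<forall>l\<le>n-2. K l (Pbar0 (V (psi 0))) \<noteq> None"
begin

abbreviation "psi0 \<equiv> psi 0"
abbreviation "E0 \<equiv> E 0"
definition Q :: "'a \<Rightarrow> real \<Rightarrow> complex" where "Q z t = cinner z (psi t)"
definition u :: 'a where "u = V psi0"

lemma sym_of_sa: assumes "self_adjoint D A" "x \<in> D" "y \<in> D" shows "cinner y (A x) = cinner (A y) x"
  using assms unfolding self_adjoint_def by blast

lemma D0_DV: "D0 \<subseteq> DV" using V_rel unfolding relatively_bounded_def by blast

lemma symH: "x \<in> D0 \<Longrightarrow> y \<in> D0 \<Longrightarrow> cinner y (H0 x) = cinner (H0 y) x"
  using sym_of_sa[OF H0_sa] .
lemma symV: "x \<in> DV \<Longrightarrow> y \<in> DV \<Longrightarrow> cinner y (V x) = cinner (V y) x"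
  using sym_of_sa[OF V_sa] .

lemma eig: assumes "l \<in> {0..lambda0}"
  shows "psi l \<in> D0" "H0 (psi l) + l *\<^sub>R V (psi l) = E l *\<^sub>R psi l"
  using eigen assms unfolding simple_eigen_def by auto

lemma zero_in: "(0::real) \<in> {0..lambda0}" using lambda0_pos by simp

lemma psi0_D0: "psi0 \<in> D0" using eig(1)[OF zero_in] .
lemma H0_psi0: "H0 psi0 = E0 *\<^sub>R psi0" using eig(2)[OF zero_in] by simp
lemma psi0_norm: "cinner psi0 psi0 = 1" using normalization zero_in by blast

lemma eigspace: "{y \<in> D0. H0 y = E0 *\<^sub>R y} = range (\<lambda>c. cscale c psi0)"
proof -
  have "simple_eigen D0 (\<lambda>x. H0 x + 0 *\<^sub>R V x) E0 psi0" using eigen zero_in by blast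
  hence "{x\<in>D0. H0 x + 0 *\<^sub>R V x = E0 *\<^sub>R x} = range (\<lambda>c. cscale c psi0)"
    unfolding simple_eigen_def by blast
  thus ?thesis by simp
qed

lemma orth: "orth_proj {y \<in> D0. H0 y = E0 *\<^sub>R y} x = cscale (cinner psi0 x) psi0"
  unfolding orth_proj_def eigspace
proof (rule the_equality)
  let ?a = "cinner psi0 x"
  show "cscale ?a psi0 \<in> range (\<lambda>c. cscale c psi0) \<and>
    (\<forall>z\<in>range (\<lambda>c. cscale c psi0). cinner z (x - cscale ?a psi0) = 0)"
    by (auto simp: cinner_cscale_left cinner_diff_right cinner_cscale_right psi0_norm)
next
  fix y assume y: "y \<in> range (\<lambda>c. cscale c psi0) \<and>
    (\<forall>z\<in>range (\<lambda>c. cscale c psi0). cinner z (x - y) = 0)"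
  then obtain b where b: "y = cscale b psi0" by auto
  have "psi0 \<in> range (\<lambda>c. cscale c psi0)" using cscale_one[of psi0] by (metis rangeI)
  with y have "cinner psi0 (x - y) = 0" by blast
  hence "cinner psi0 x - b = 0" by (simp add: b cinner_diff_right cinner_cscale_right psi0_norm)
  thus "y = cscale (cinner psi0 x) psi0" using b by simp
qed

lemma Pbar: "Pbar0 x = x - cscale (cinner psi0 x) psi0"
  unfolding Pbar0_def orth ..

lemma K0_Some: assumes "K 0 x = Some w"
  shows "w \<in> D0" "Pbar0 w = w" "H0 w - E0 *\<^sub>R w = Pbar0 x" "cinner w psi0 = 0"
proof -
  let ?P = "\<lambda>chi. chi \<in> D0 \<and> Pbar0 chi = chi \<and> H0 chi - E0 *\<^sub>R chi = Pbar0 x"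
  have ex: "\<exists>!chi. ?P chi" and w: "w = (THE chi. ?P chi)"
    using assms unfolding K0_def reduced_resolvent_def by (auto split: if_splits)
  have "?P w" unfolding w by (rule theI'[OF ex])
  thus "w \<in> D0" "Pbar0 w = w" "H0 w - E0 *\<^sub>R w = Pbar0 x" by auto
  have "cinner psi0 (Pbar0 w) = 0" by (simp add: Pbar cinner_diff_right cinner_cscale_right psi0_norm)
  hence "cinner psi0 w = 0" using \<open>Pbar0 w = w\<close> by simp
  thus "cinner w psi0 = 0" using cinner_commute[of w psi0] by simp
qed

lemma mu_eq: assumes t: "t \<in> {0..lambda0}"
  shows "complex_of_real (E t - E0) = complex_of_real t * Q u t"
proof -
  have pD: "psi t \<in> D0" using eig(1)[OF t] .
  have "cinner psi0 (H0 (psi t) + t *\<^sub>R V (psi t)) = cinner psi0 (E t *\<^sub>R psi t)"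
    using eig(2)[OF t] by simp
  moreover have "cinner psi0 (V (psi t)) = cinner (V psi0) (psi t)"
    using symV[of "psi t" psi0] D0_DV pD psi0_D0 by blast
  ultimately have "cinner (H0 psi0) (psi t) + t * cinner (V psi0) (psi t) = E t"
    using normalization t
    by (simp add: cinner_add_right cinner_scaleR_right symH[OF pD psi0_D0])
  hence "E0 + t * Q u t = E t"
    using normalization t by (simp add: H0_psi0 cinner_scaleR_left Q_def u_def)
  thus ?thesis by (simp add: algebra_simps)
qed

lemma identI: assumes t: "t \<in> {0..lambda0}" and Kz: "K 0 z = Some w"
  shows "Q z t = cinner z psi0 + complex_of_real (E t - E0) * Q w t - complex_of_real t * Q (V w) t"
proof -
  have pD: "psi t \<in> D0" using eig(1)[OF t] .
  have wD: "w \<in> D0" using K0_Some[OF Kz] by simp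
  define a where "a = cinner psi0 z"
  have z: "z = Pbar0 z + cscale a psi0" by (simp add: Pbar a_def)
  have n1: "cinner psi0 (psi t) = 1" using normalization t by blast
  have "Q z t = cinner (Pbar0 z) (psi t) + cnj a"
    by (subst z) (simp add: Q_def cinner_add_left cinner_cscale_left n1)
  also have "cnj a = cinner z psi0" by (simp add: a_def cinner_commute[of z psi0])
  also have "cinner (Pbar0 z) (psi t) = cinner (H0 w - E0 *\<^sub>R w) (psi t)"
    using K0_Some(3)[OF Kz] by simp
  also have "\<dots> = cinner w (H0 (psi t)) - E0 * Q w t"
    by (simp add: cinner_diff_left cinner_scaleR_left symH[OF pD wD] Q_def)
  also have "H0 (psi t) = E t *\<^sub>R psi t - t *\<^sub>R V (psi t)"
    using eig(2)[OF t] by (simp add: algebra_simps)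
  also have "cinner w (E t *\<^sub>R psi t - t *\<^sub>R V (psi t)) = E t * Q w t - t * Q (V w) t"
    using symV[of "psi t" w] D0_DV pD wD
    by (auto simp: cinner_diff_right cinner_scaleR_right Q_def)
  finally show ?thesis by (simp add: algebra_simps)
qed

end



context pert begin

lemma ev_in: "eventually (\<lambda>t. t \<in> {0<..<lambda0}) (at_right 0)"
  using eventually_at_right_real[OF lambda0_pos] .

lemma Q_lim: "((\<lambda>t. Q z t) \<longlongrightarrow> cinner z psi0) (at_right 0)"
proof -
  have d: "((\<lambda>t. psi t - psi0) \<longlongrightarrow> 0) (at_right 0)"
    using tendsto_diff[OF psi_lim tendsto_const[of psi0]] by simp
  have "((\<lambda>t. cinner z (psi t - psi0)) \<longlongrightarrow> 0) (at_right 0)"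
    by (rule tendsto_0_le[OF d, where K="norm z"])
       (auto intro!: always_eventually simp: cauchy_schwarz mult.commute)
  hence "((\<lambda>t. cinner z (psi t - psi0) + cinner z psi0) \<longlongrightarrow> 0 + cinner z psi0) (at_right 0)"
    by (intro tendsto_add tendsto_const)
  thus ?thesis by (simp add: Q_def cinner_diff_right)
qed


lemma real_mu: "eventually (\<lambda>t. cnj (Q u t) = Q u t) (at_right 0)"
  using ev_in
proof (rule eventually_mono)
  fix t assume t: "t \<in> {0<..<lambda0}"
  hence "complex_of_real (E t - E0) = complex_of_real t * Q u t" using mu_eq by simp
  hence "Q u t = complex_of_real ((E t - E0) / t)" using t by (simp add: field_simps)
  thus "cnj (Q u t) = Q u t" by simp
qed

lemma E1_u: "cinner u psi0 = Es 1"
proof -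
  have "psi0 \<in> DV" using D0_DV psi0_D0 by auto
  hence "cinner u psi0 = cinner psi0 (V psi0)" using symV[of psi0 psi0] by (simp add: u_def)
  thus ?thesis unfolding E1_def .
qed

lemma E1_real: "cnj (Es 1) = Es 1"
proof -
  have "cnj (Es 1) = cnj (cinner u psi0)" using E1_u by simp
  also have "\<dots> = cinner psi0 u" using cinner_commute[of psi0 u] by simp
  also have "\<dots> = Es 1" unfolding E1_def u_def ..
  finally show ?thesis .
qed

lemma Pbar_idem: "Pbar0 (Pbar0 x) = Pbar0 x"
proof -
  have "cinner psi0 (Pbar0 x) = 0" by (simp add: Pbar cinner_diff_right cinner_cscale_right psi0_norm)
  thus ?thesis by (simp add: Pbar[of "Pbar0 x"])
qed

lemma K_dep: assumes "K 0 x = K 0 y" "m \<le> n - 2" shows "K m x = K m y"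
proof (cases "m = 0")
  case True then show ?thesis using assms by simp
next
  case False
  then have "m \<in> {1..n-2}" using assms by auto
  then show ?thesis using assms(1) Km_def by (simp add: psum_def pcomp_def)
qed

lemma K_Pbar: "m \<le> n - 2 \<Longrightarrow> K m (Pbar0 x) = K m x"
  by (rule K_dep) (simp add: K0_def reduced_resolvent_def Pbar_idem)

lemma K_u: "m \<le> n - 2 \<Longrightarrow> K m u \<noteq> None"
  using dom_K K_Pbar by (simp add: u_def)

lemma Km_eq: assumes "m \<in> {1..n-2}" "K 0 z = Some w"
  shows "K m z = psum (\<lambda>j _. K (j-1) (if j = m then cscale (Es 1) w - V w else cscale (Es (m+1-j)) w)) m z"
proof -
  have "w \<in> DV" using K0_Some(1)[OF assms(2)] D0_DV by auto
  have eq: "\<And>j. pcomp (K (j-1)) (pcomp (shift_op DV V (Es (m+1-j)) (j=m)) (K 0)) z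
     = K (j-1) (if j = m then cscale (Es 1) w - V w else cscale (Es (m+1-j)) w)"
    using \<open>w \<in> DV\<close> assms(2) by (auto simp: pcomp_def shift_op_def)
  have "K m z = psum (\<lambda>j. pcomp (K (j - 1)) (pcomp (shift_op DV V (Es (m + 1 - j)) (j = m)) (K 0))) m z"
    using Km_def assms(1) by auto
  also have "\<dots> = psum (\<lambda>j _. K (j-1) (if j = m then cscale (Es 1) w - V w else cscale (Es (m+1-j)) w)) m z"
    by (simp only: psum_def eq)
  finally show ?thesis .
qed

definition Mexp :: "nat \<Rightarrow> bool" where
  "Mexp p \<longleftrightarrow> sm p (\<lambda>t. Q u t - (\<Sum>k<Suc p. Es (Suc k) * complex_of_real t ^ k))"

definition Rexp :: "nat \<Rightarrow> 'a \<Rightarrow> bool" where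
  "Rexp p z \<longleftrightarrow> sm p (\<lambda>t. Q z t - (cinner z psi0 - (\<Sum>m<p. complex_of_real t ^ (m+1) * cinner (the (K m z)) u)))"

lemma Mexp_mono: assumes "Mexp p" "q \<le> p" shows "Mexp q"
proof -
  have split: "(\<Sum>k<Suc p. f k) = (\<Sum>k<Suc q. f k) + (\<Sum>k\<in>{Suc q..<Suc p}. f k)" for f :: "nat \<Rightarrow> complex"
  proof -
    have "sum f {0..<Suc q} + sum f {Suc q..<Suc p} = sum f {0..<Suc p}"
      by (rule sum.atLeastLessThan_concat) (use assms(2) in auto)
    thus ?thesis by (simp only: lessThan_atLeast0)
  qed
  have a: "sm q (\<lambda>t. Q u t - (\<Sum>k<Suc p. Es (Suc k) * complex_of_real t ^ k))"
    using assms unfolding Mexp_def by (auto intro: sm_mono)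
  have b: "sm q (\<lambda>t. \<Sum>k\<in>{Suc q..<Suc p}. Es (Suc k) * complex_of_real t ^ k)"
    by (rule sm_sum) (auto intro: sm_pow)
  have eq: "Q u t - (\<Sum>k<Suc p. Es (Suc k) * complex_of_real t ^ k) + (\<Sum>k\<in>{Suc q..<Suc p}. Es (Suc k) * complex_of_real t ^ k)
     = Q u t - (\<Sum>k<Suc q. Es (Suc k) * complex_of_real t ^ k)" for t
    unfolding split[of "\<lambda>k. Es (Suc k) * complex_of_real t ^ k"] by simp
  show ?thesis unfolding Mexp_def
    by (rule sm_cong[OF _ sm_add[OF a b]]) (intro always_eventually allI eq)
qed

end



context pert begin

lemma R_main: "p \<le> n - 1 \<Longrightarrow> (0 < p \<Longrightarrow> Mexp (p - 1)) \<Longrightarrow> (\<forall>m<p. K m z \<noteq> None) \<Longrightarrow> Rexp p z"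
proof (induction p arbitrary: z rule: less_induct)
  case (less p z)
  show ?case
  proof (cases "p = 0")
    case True
    show ?thesis unfolding Rexp_def True using sm_conv[OF Q_lim[of z]] by simp
  next
    case False
    hence p1: "0 < p" by simp
    have pn: "p \<le> n - 1" using less.prems by simp
    have Mp: "Mexp (p - 1)" using less.prems p1 by simp
    have dom: "\<forall>m<p. K m z \<noteq> None" using less.prems by simp
    obtain w where Kz: "K 0 z = Some w" using dom p1 by auto
    have wD0: "w \<in> D0" using K0_Some(1)[OF Kz] .
    have wDV: "w \<in> DV" using wD0 D0_DV by auto
    define y where "y = cscale (Es 1) w - V w"
    define a where "a m = cinner (the (K m z)) u" for m
    define b where "b m = cinner (the (K m y)) u" for m
    define g where "g k m = cinner (the (K m (cscale (Es k) w))) u" for k m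
    define F where "F m j = (if j = m then y else cscale (Es (m+1-j)) w)" for m j
    have Kmz: "K m z = psum (\<lambda>j _. K (j-1) (F m j)) m z" if "m \<in> {1..<p}" for m
      using Km_eq[of m z w] that pn Kz unfolding F_def y_def by auto
    have Kmz_def: "\<forall>j\<in>{1..m}. K (j-1) (F m j) \<noteq> None" if "m \<in> {1..<p}" for m
      using Kmz[OF that] dom that by (auto simp: psum_def split: if_splits)
    have Kmz_val: "the (K m z) = (\<Sum>j=1..m. the (K (j-1) (F m j)))" if "m \<in> {1..<p}" for m
      using Kmz[OF that] Kmz_def[OF that] by (simp add: psum_def)
    have domy: "\<forall>m<p-1. K m y \<noteq> None"
    proof (intro allI impI)
      fix m assume "m < p - 1"
      hence "Suc m \<in> {1..<p}" by auto
      from Kmz_def[OF this, rule_format, of "Suc m"] show "K m y \<noteq> None" by (simp add: F_def)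
    qed
    have domg: "\<forall>m<p-k. K m (cscale (Es k) w) \<noteq> None" if k: "k \<in> {2..p}" for k
    proof (intro allI impI)
      fix m assume "m < p - k"
      hence mk: "m + k \<in> {1..<p}" using k by auto
      have "Suc m \<in> {1..m+k}" using k by simp
      from Kmz_def[OF mk, rule_format, OF this] k show "K m (cscale (Es k) w) \<noteq> None"
        by (simp add: F_def)
    qed
    have a_rec: "\<forall>m\<in>{1..<p}. a m = b (m-1) + (\<Sum>j\<in>{1..<m}. g (m+1-j) (j-1))"
    proof
      fix m assume m: "m \<in> {1..<p}"
      have "a m = (\<Sum>j=1..m. cinner (the (K (j-1) (F m j))) u)"
        unfolding a_def Kmz_val[OF m] cinner_sum_left ..
      also have "\<dots> = (\<Sum>j\<in>{1..<m}. cinner (the (K (j-1) (F m j))) u) + cinner (the (K (m-1) (F m m))) u"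
        using m by (simp add: atLeastLessThanSuc_atLeastAtMost[symmetric] sum.atLeastLessThan_Suc)
      also have "(\<Sum>j\<in>{1..<m}. cinner (the (K (j-1) (F m j))) u) = (\<Sum>j\<in>{1..<m}. g (m+1-j) (j-1))"
        by (rule sum.cong) (auto simp: F_def g_def)
      also have "cinner (the (K (m-1) (F m m))) u = b (m-1)" by (simp add: F_def b_def)
      finally show "a m = b (m-1) + (\<Sum>j\<in>{1..<m}. g (m+1-j) (j-1))" by simp
    qed
    have A: "(\<Sum>m<p. T^(m+1)*a m) = T * a 0 + (\<Sum>m<p-1. T^(m+2) * b m)
           + (\<Sum>k\<in>{2..p}. \<Sum>m<p-k. T^(k+m+1) * g k m)" for T
      by (rule reidx) (use a_rec p1 in auto)
    have Ry: "Rexp (p-1) y"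
    proof (rule less.IH)
      show "p - 1 < p" "p - 1 \<le> n - 1" using p1 pn by auto
      show "0 < p - 1 \<Longrightarrow> Mexp (p - 1 - 1)" using Mp by (auto intro: Mexp_mono)
      show "\<forall>m<p - 1. K m y \<noteq> None" by (rule domy)
    qed
    have Rg: "Rexp (p-k) (cscale (Es k) w)" if k: "k \<in> {2..p}" for k
    proof (rule less.IH)
      show "p - k < p" "p - k \<le> n - 1" using p1 pn k by auto
      show "0 < p - k \<Longrightarrow> Mexp (p - k - 1)" using Mp by (auto intro: Mexp_mono)
      show "\<forall>m<p - k. K m (cscale (Es k) w) \<noteq> None" by (rule domg[OF k])
    qed
    define r where "r t = Q u t - (\<Sum>k<p. Es (Suc k) * complex_of_real t ^ k)" for t
    define ry where "ry t = Q y t - (cinner y psi0 - (\<Sum>m<p-1. complex_of_real t ^ (m+1) * b m))" for t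
    define rk where "rk k t = Q (cscale (Es k) w) t - (cinner (cscale (Es k) w) psi0
                     - (\<Sum>m<p-k. complex_of_real t ^ (m+1) * g k m))" for k t
    have smr: "sm (p-1) r" using Mp p1 unfolding Mexp_def r_def by simp
    have s1': "sm (p - 1 + 1) (\<lambda>t. complex_of_real t ^ 1 * (Q w t * cnj (r t)))"
      by (rule sm_times_pow[OF sm_mult_conv[OF sm_cnj[OF smr] Q_lim]])
    have s1: "sm p (\<lambda>t. complex_of_real t ^ 1 * (Q w t * cnj (r t)))"
      using s1' p1 by simp
    have smy: "sm (p-1) ry" using Ry unfolding Rexp_def ry_def b_def by simp
    have s2: "sm p (\<lambda>t. complex_of_real t ^ 1 * ry t)"
      using sm_times_pow[OF smy, of 1] p1 by simp
    have s3: "sm p (\<lambda>t. \<Sum>k\<in>{2..p}. complex_of_real t ^ k * rk k t)"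
    proof (rule sm_sum)
      fix k assume k: "k \<in> {2..p}"
      have "sm (p-k) (rk k)" using Rg[OF k] unfolding Rexp_def rk_def g_def by simp
      from sm_times_pow[OF this, of k] k show "sm p (\<lambda>t. complex_of_real t ^ k * rk k t)" by simp
    qed
    have ident: "Q z t - (cinner z psi0 - (\<Sum>m<p. complex_of_real t ^ (m+1) * cinner (the (K m z)) u))
      = complex_of_real t ^ 1 * (Q w t * cnj (r t)) + complex_of_real t ^ 1 * ry t
        + (\<Sum>k\<in>{2..p}. complex_of_real t ^ k * rk k t)" if t: "t \<in> {0<..<lambda0}" for t
    proof -
      let ?T = "complex_of_real t"
      have t': "t \<in> {0..lambda0}" using t by auto
      have mu: "complex_of_real (E t - E0) = ?T * Q u t" by (rule mu_eq[OF t'])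
      have I: "Q z t = cinner z psi0 + ?T * Q u t * Q w t - ?T * Q (V w) t"
        using identI[OF t' Kz] mu by simp
      have mur: "cnj (Q u t) = Q u t"
      proof -
        have "Q u t = complex_of_real ((E t - E0) / t)" using mu t by (simp add: field_simps)
        thus ?thesis by simp
      qed
      have cr: "cnj (r t) = Q u t - (\<Sum>k<p. cnj (Es (Suc k)) * ?T ^ k)"
        by (simp add: r_def mur)
      have Qy: "Q y t = cnj (Es 1) * Q w t - Q (V w) t"
        by (simp add: Q_def y_def cinner_diff_left cinner_cscale_left)
      have y0: "cinner y psi0 = - a 0"
      proof -
        have "cinner w (V psi0) = cinner (V w) psi0"
          using symV[of psi0 w] wDV D0_DV psi0_D0 by auto
        thus ?thesis using K0_Some(4)[OF Kz]
          by (simp add: y_def a_def Kz u_def cinner_diff_left cinner_cscale_left)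
      qed
      have Qg: "Q (cscale (Es k) w) t = cnj (Es k) * Q w t" for k
        by (simp add: Q_def cinner_cscale_left)
      have g0: "cinner (cscale (Es k) w) psi0 = 0" for k
        using K0_Some(4)[OF Kz] by (simp add: cinner_cscale_left)
      have "Q z t - (cinner z psi0 - (\<Sum>m<p. ?T ^ (m+1) * a m))
        = ?T^1 * (Q w t * (Q u t - (\<Sum>k<p. (cnj \<circ> Es) (Suc k) * ?T^k)))
         + ?T^1 * (((cnj \<circ> Es) 1 * Q w t - Q (V w) t) - (-a 0 - (\<Sum>m<p-1. ?T^(m+1) * b m)))
         + (\<Sum>k\<in>{2..p}. ?T^k * ((cnj \<circ> Es) k * Q w t - (0 - (\<Sum>m<p-k. ?T^(m+1) * g k m))))"
        by (rule final_alg[OF _ A I]) (use p1 in simp)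
      also have "\<dots> = ?T ^ 1 * (Q w t * cnj (r t)) + ?T ^ 1 * ry t + (\<Sum>k\<in>{2..p}. ?T ^ k * rk k t)"
        by (simp add: cr ry_def Qy y0 rk_def Qg g0)
      finally show ?thesis by (simp add: a_def)
    qed
    show ?thesis unfolding Rexp_def
      by (rule sm_cong[OF _ sm_add[OF sm_add[OF s1 s2] s3]])
         (rule eventually_mono[OF ev_in], rule ident[symmetric])
  qed
qed

end



context pert begin

lemma M_all: "p \<le> n - 1 \<Longrightarrow> Mexp p"
proof (induction p)
  case 0
  show ?case unfolding Mexp_def using sm_conv[OF Q_lim[of u]] by (simp add: E1_u)
next
  case (Suc p)
  have Mp: "Mexp p" using Suc by simp
  have R: "Rexp (Suc p) u"
    by (rule R_main) (use Suc.prems Mp K_u in auto)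
  have c: "sm (Suc p) (\<lambda>t. cnj (Q u t - (cinner u psi0 - (\<Sum>m<Suc p. complex_of_real t ^ (m+1) * cinner (the (K m u)) u))))"
    using sm_cnj[OF R[unfolded Rexp_def]] .
  have Em: "cnj (cinner (the (K m u)) u) = - Es (Suc (Suc m))" if "m < Suc p" for m
  proof -
    have "Suc (Suc m) \<in> {2..n}" using that Suc.prems by auto
    hence "Es (Suc (Suc m)) = - cinner u (the (K m u))" using Em_def by (simp add: u_def)
    thus ?thesis using cinner_commute[of u "the (K m u)"] by simp
  qed
  have sumeq: "(\<Sum>m<Suc p. complex_of_real t ^ (m+1) * cnj (cinner (the (K m u)) u))
      = - (\<Sum>m<Suc p. Es (Suc (Suc m)) * complex_of_real t ^ (Suc m))" for t
    by (simp add: Em sum_negf[symmetric] mult.commute)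
  have "eventually (\<lambda>t. cnj (Q u t - (cinner u psi0 - (\<Sum>m<Suc p. complex_of_real t ^ (m+1) * cinner (the (K m u)) u)))
     = Q u t - (\<Sum>k<Suc (Suc p). Es (Suc k) * complex_of_real t ^ k)) (at_right 0)"
    using real_mu
  proof (rule eventually_mono)
    fix t assume mr: "cnj (Q u t) = Q u t"
    have "cnj (Q u t - (cinner u psi0 - (\<Sum>m<Suc p. complex_of_real t ^ (m+1) * cinner (the (K m u)) u)))
        = Q u t - (Es 1 - (\<Sum>m<Suc p. complex_of_real t ^ (m+1) * cnj (cinner (the (K m u)) u)))"
      using E1_real by (simp add: mr E1_u)
    also have "\<dots> = Q u t - (\<Sum>k<Suc (Suc p). Es (Suc k) * complex_of_real t ^ k)"
      unfolding sumeq sum.lessThan_Suc_shift[of _ "Suc p"] by simp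
    finally show "cnj (Q u t - (cinner u psi0 - (\<Sum>m<Suc p. complex_of_real t ^ (m+1) * cinner (the (K m u)) u)))
     = Q u t - (\<Sum>k<Suc (Suc p). Es (Suc k) * complex_of_real t ^ k)" .
  qed
  from sm_cong[OF this c] show ?case unfolding Mexp_def .
qed

lemma final: assumes m: "m \<in> {1..n}"
  shows "((\<lambda>l. (complex_of_real (E l) - (\<Sum>k\<le>m. Es k * complex_of_real l ^ k))
                   / complex_of_real l ^ m) \<longlongrightarrow> 0) (at_right 0)"
proof -
  obtain q where q: "m = Suc q" using m by (cases m) auto
  have "Mexp q" by (rule M_all) (use m q in auto)
  hence lim: "((\<lambda>t. (Q u t - (\<Sum>k<Suc q. Es (Suc k) * complex_of_real t ^ k)) / complex_of_real t ^ q) \<longlongrightarrow> 0) (at_right 0)"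
    unfolding Mexp_def sm_def .
  have "eventually (\<lambda>t. (Q u t - (\<Sum>k<Suc q. Es (Suc k) * complex_of_real t ^ k)) / complex_of_real t ^ q
     = (complex_of_real (E t) - (\<Sum>k\<le>m. Es k * complex_of_real t ^ k)) / complex_of_real t ^ m) (at_right 0)"
    using ev_in
  proof (rule eventually_mono)
    fix t assume t: "t \<in> {0<..<lambda0}"
    let ?T = "complex_of_real t"
    have mu: "complex_of_real (E t) - complex_of_real E0 = ?T * Q u t"
      using mu_eq[of t] t by simp
    have s: "(\<Sum>k\<le>m. Es k * ?T ^ k) = complex_of_real E0 + ?T * (\<Sum>k<Suc q. Es (Suc k) * ?T ^ k)"
      unfolding q sum.atMost_Suc_shift lessThan_Suc_atMost E0_def
      by (simp add: sum_distrib_left mult_ac)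
    have "complex_of_real (E t) - (\<Sum>k\<le>m. Es k * ?T ^ k) = ?T * (Q u t - (\<Sum>k<Suc q. Es (Suc k) * ?T ^ k))"
      unfolding s using mu by (simp add: algebra_simps)
    thus "(Q u t - (\<Sum>k<Suc q. Es (Suc k) * ?T ^ k)) / ?T ^ q
     = (complex_of_real (E t) - (\<Sum>k\<le>m. Es k * ?T ^ k)) / ?T ^ m"
      using t by (simp add: q)
  qed
  from Lim_transform_eventually[OF lim this] show ?thesis .
qed

end

theorem mainTheorem6:
  fixes D0 DV :: "'a::complex_hilbert set"
    and H0 V :: "'a \<Rightarrow> 'a"
    and lambda0 :: real
    and E :: "real \<Rightarrow> real"
    and psi :: "real \<Rightarrow> 'a"
    and n :: nat
    and Pbar0 :: "'a \<Rightarrow> 'a"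
    and K :: "nat \<Rightarrow> 'a pop"
    and Es :: "nat \<Rightarrow> complex"
  assumes H0_sa: "self_adjoint D0 H0"
    and V_sa: "self_adjoint DV V"
    and H0_below: "bounded_below D0 H0"
    and V_rel: "relatively_bounded DV V D0 H0"
    and lambda0_pos: "lambda0 > 0"
    and eigen: "\<forall>l\<in>{0..lambda0}.
                  simple_eigen D0 (\<lambda>x. H0 x + l *\<^sub>R V x) (E l) (psi l)"
    and psi_lim: "(psi \<longlongrightarrow> psi 0) (at_right 0)"
    and E_lim: "(E \<longlongrightarrow> E 0) (at_right 0)"
    and normalization: "\<forall>l\<in>{0..lambda0}. cinner (psi 0) (psi l) = 1"
    and n_ge: "n \<ge> 2"
    and Pbar0_def: "Pbar0 = (\<lambda>x. x - orth_proj {y \<in> D0. H0 y = E 0 *\<^sub>R y} x)"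
    and K0_def: "K 0 = reduced_resolvent D0 H0 (E 0) Pbar0"
    and Km_def: "\<forall>m\<in>{1..n-2}. K m =
                   psum (\<lambda>j. pcomp (K (j - 1))
                                 (pcomp (shift_op DV V (Es (m + 1 - j)) (j = m)) (K 0))) m"
    and E0_def: "Es 0 = complex_of_real (E 0)"
    and E1_def: "Es 1 = cinner (psi 0) (V (psi 0))"
    and Em_def: "\<forall>m\<in>{2..n}. Es m = - cinner (V (psi 0)) (the (K (m - 2) (V (psi 0))))"
    and dom_K: "\<forall>l\<le>n-2. K l (Pbar0 (V (psi 0))) \<noteq> None"
  shows "\<forall>m\<in>{1..n}.
           ((\<lambda>l. (complex_of_real (E l) - (\<Sum>k\<le>m. Es k * complex_of_real l ^ k))
                   / complex_of_real l ^ m) \<longlongrightarrow> 0) (at_right 0)"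
  proof -
  interpret P: pert D0 DV H0 V lambda0 E psi n Pbar0 K Es
    using H0_sa V_sa V_rel lambda0_pos eigen psi_lim normalization Pbar0_def K0_def Km_def
      E0_def E1_def Em_def dom_K by (simp add: pert_def)
  show ?thesis using P.final by blast
qed

end
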